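(* Fix $k\in\mathbb{Z}_{\ge1}$. Let $\sigma\in\mathrm{Av}(312)$ with $|\sigma|\ge k$ and $\mathrm{en}_k(\sigma)=\pi$, where $\pi\in\mathrm{Av}_k(312)$. Let $\pi'\in\mathrm{Av}_k(312)$ be such that $\mathrm{pat}_{\{1,\dots,k-1\}}(\pi')=\mathrm{pat}_{\{2,\dots,k\}}(\pi)$ (i.e. the edge $\pi'$ of $\mathcal{O}v(k,\mathrm{Av}(312))$ starts where the edge $\pi$ ends). Then there exists $\ell\in[|\sigma|+1]$ such that $\sigma^{*\ell}\in\mathrm{Av}(312)$ and $\mathrm{en}_k(\sigma^{*\ell})=\pi'$.
   Context: For $I=\{i_1<\dots<i_m\}$, $\mathrm{pat}_I(\sigma)=\mathrm{std}(\sigma(i_1),\dots,\sigma(i_m))$, where for distinct reals $x_1,\dots,x_m$, $\mathrm{std}(x_1,\dots,x_m)$ is the unique permutation $\pi$ of $[m]$ with $\pi(i)<\pi(j)\iff x_i<x_j$. $\mathrm{en}_k(\sigma)=\mathrm{pat}_{\{|\sigma|-k+1,\dots,|\sigma|\}}(\sigma)$. $\mathrm{Av}(312)$ is the set of permutations $\sigma$ with no $I$ such that $\mathrm{pat}_I(\sigma)=312$, and $\mathrm{Av}_k(312)$ those of size $k$. For $\sigma\in\mathcal S_n$ and $\ell\in[n+1]$, $\sigma^{*\ell}=\mathrm{std}(\sigma(1),\dots,\sigma(n),\ell-1/2)\in\mathcal S_{n+1}$ (append a final value $\ell$, shifting up by one all earlier values $\ge\ell$). The overlap graph $\mathcal{O}v(k,\mathrm{Av}(312))$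 has vertex set $\mathrm{Av}_{k-1}(312)$ and, for each $\pi\in\mathrm{Av}_k(312)$, an edge labelled $\pi$ from $\mathrm{pat}_{\{1,\dots,k-1\}}(\pi)$ to $\mathrm{pat}_{\{2,\dots,k\}}(\pi)$. *)

theory Defs
  imports Complex_Main
begin

text \<open>Positions are 1-indexed in the paper; list index i-1 holds sigma(i).\<close>

definition is_perm :: "nat list \<Rightarrow> bool" where
  "is_perm xs \<longleftrightarrow> distinct xs \<and> set xs = {1..length xs}"

definition std :: "'a::linorder list \<Rightarrow> nat list" where
  "std xs = map (\<lambda>x. card {y \<in> set xs. y < x} + 1) xs"

definition pat :: "nat set \<Rightarrow> nat list \<Rightarrow> nat list" where
  "pat I \<sigma> = std (map (\<lambda>i. \<sigma> ! (i - 1)) (sorted_list_of_set I))"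

definition en :: "nat \<Rightarrow> nat list \<Rightarrow> nat list" where
  "en k \<sigma> = pat {length \<sigma> - k + 1..length \<sigma>} \<sigma>"

definition contains :: "nat list \<Rightarrow> nat list \<Rightarrow> bool" where
  "contains \<tau> \<sigma> \<longleftrightarrow> (\<exists>I. I \<subseteq> {1..length \<sigma>} \<and> card I = length \<tau> \<and> pat I \<sigma> = \<tau>)"

definition Av :: "nat list \<Rightarrow> nat list set" where
  "Av \<tau> = {\<sigma>. is_perm \<sigma> \<and> \<not> contains \<tau> \<sigma>}"

definition Av_k :: "nat \<Rightarrow> nat list \<Rightarrow> nat list set" where
  "Av_k k \<tau> = {\<sigma> \<in> Av \<tau>. length \<sigma> = k}"

definition star :: "nat list \<Rightarrow> nat \<Rightarrow> nat list" where
  "star \<sigma> l = std (map real \<sigma> @ [real l - 1/2])"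

end

theory Submission
  imports Defs
begin


definition oiso :: "'a::linorder list \<Rightarrow> 'b::linorder list \<Rightarrow> bool" where
  "oiso xs ys \<longleftrightarrow> length xs = length ys \<and>
     (\<forall>i<length xs. \<forall>j<length xs. xs!i < xs!j \<longleftrightarrow> ys!i < ys!j)"

definition no312 :: "'a::linorder list \<Rightarrow> bool" where
  "no312 xs \<longleftrightarrow> (\<forall>a b c. a < b \<and> b < c \<and> c < length xs \<longrightarrow> \<not> (xs!b < xs!c \<and> xs!c < xs!a))"

lemma std_length[simp]: "length (std xs) = length xs"
  by (simp add: std_def)

lemma std_nth: "i < length xs \<Longrightarrow> std xs ! i = card {y\<in>set xs. y < xs!i} + 1"
  by (simp add: std_def)

lemma std_less_iff:
  assumes "i < length xs" "j < length xs"
  shows "std xs ! i < std xs ! j \<longleftrightarrow> xs!i < xs!j"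
proof
  assume "xs!i < xs!j"
  hence "{y\<in>set xs. y < xs!i} \<subset> {y\<in>set xs. y < xs!j}"
    using assms by (auto intro!: nth_mem)
  hence "card {y\<in>set xs. y < xs!i} < card {y\<in>set xs. y < xs!j}"
    by (intro psubset_card_mono) auto
  thus "std xs ! i < std xs ! j" using assms by (simp add: std_nth)
next
  assume a: "std xs ! i < std xs ! j"
  show "xs!i < xs!j"
  proof (rule ccontr)
    assume "\<not> xs!i < xs!j"
    hence "{y\<in>set xs. y < xs!j} \<subseteq> {y\<in>set xs. y < xs!i}" by auto
    hence "card {y\<in>set xs. y < xs!j} \<le> card {y\<in>set xs. y < xs!i}"
      by (intro card_mono) auto
    thus False using a assms by (simp add: std_nth)
  qed
qed

lemma oiso_std: "oiso (std xs) xs"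
  by (simp add: oiso_def std_less_iff)

lemma oiso_sym: "oiso xs ys \<Longrightarrow> oiso ys xs"
  by (simp add: oiso_def)

lemma oiso_trans: "oiso xs ys \<Longrightarrow> oiso ys zs \<Longrightarrow> oiso xs zs"
  by (simp add: oiso_def)

lemma oiso_drop: "oiso xs ys \<Longrightarrow> oiso (drop m xs) (drop m ys)"
  by (simp add: oiso_def)

lemma oiso_take: "oiso xs ys \<Longrightarrow> oiso (take m xs) (take m ys)"
  by (simp add: oiso_def)

lemma std_card:
  assumes "distinct xs" "i < length xs"
  shows "card {y\<in>set xs. y < xs!i} = card {j. j < length xs \<and> xs!j < xs!i}"
proof -
  have "{y\<in>set xs. y < xs!i} = (\<lambda>j. xs!j) ` {j. j < length xs \<and> xs!j < xs!i}"
    by (auto simp: in_set_conv_nth)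
  moreover have "inj_on (\<lambda>j. xs!j) {j. j < length xs \<and> xs!j < xs!i}"
    using assms(1) by (auto simp: inj_on_def nth_eq_iff_index_eq)
  ultimately show ?thesis by (simp add: card_image)
qed

lemma std_eq:
  assumes "distinct xs" "distinct ys" "oiso xs ys"
  shows "std xs = std ys"
proof (rule nth_equalityI)
  show "length (std xs) = length (std ys)" using assms(3) by (simp add: oiso_def)
  fix i assume "i < length (std xs)"
  hence i: "i < length xs" "i < length ys" using assms(3) by (auto simp: oiso_def)
  have "{j. j < length xs \<and> xs!j < xs!i} = {j. j < length ys \<and> ys!j < ys!i}"
    using assms(3) i by (auto simp: oiso_def)
  thus "std xs ! i = std ys ! i"
    using i assms by (simp add: std_nth std_card)
qed


lemma oiso_distinct: "oiso xs ys \<Longrightarrow> distinct xs \<Longrightarrow> distinct ys"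
proof -
  assume o: "oiso xs ys" and d: "distinct xs"
  show "distinct ys" unfolding distinct_conv_nth
  proof (intro allI impI)
    fix i j assume ij: "i < length ys" "j < length ys" "i \<noteq> j"
    hence "xs!i \<noteq> xs!j" using o d by (simp add: oiso_def nth_eq_iff_index_eq)
    hence "xs!i < xs!j \<or> xs!j < xs!i" by auto
    thus "ys!i \<noteq> ys!j" using o ij unfolding oiso_def by auto
  qed
qed

lemma distinct_std: "distinct xs \<Longrightarrow> distinct (std xs)"
  using oiso_distinct[OF oiso_sym[OF oiso_std]] by blast

lemma card_less_bound:
  fixes xs :: "'a::linorder list"
  assumes "x \<in> set xs"
  shows "card {y\<in>set xs. y < x} < length xs"
proof -
  have "{y\<in>set xs. y < x} \<subseteq> set xs" "x \<in> set xs" "x \<notin> {y\<in>set xs. y < x}" using assms by auto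
  hence "{y\<in>set xs. y < x} \<subset> set xs" by blast
  hence "card {y\<in>set xs. y < x} < card (set xs)" by (intro psubset_card_mono) auto
  also have "\<dots> \<le> length xs" by (rule card_length)
  finally show ?thesis .
qed

lemma is_perm_std: "distinct xs \<Longrightarrow> is_perm (std xs)"
proof -
  assume d: "distinct xs"
  have sub: "set (std xs) \<subseteq> {1..length xs}"
    using card_less_bound by (auto simp: std_def Suc_le_eq)
  have "card (set (std xs)) = length xs"
    using distinct_std[OF d] by (simp add: distinct_card)
  hence "set (std xs) = {1..length xs}"
    using sub by (intro card_subset_eq) auto
  thus ?thesis using distinct_std[OF d] by (simp add: is_perm_def)
qed

lemma std_perm: "is_perm p \<Longrightarrow> std p = p"
proof (rule nth_equalityI)
  assume p: "is_perm p"
  show "length (std p) = length p" by simp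
  fix i assume "i < length (std p)"
  hence i: "i < length p" by simp
  have pi: "p!i \<in> {1..length p}" using p i nth_mem unfolding is_perm_def by blast
  have sp: "set p = {1..length p}" using p unfolding is_perm_def by simp
  have "{y\<in>{1..length p}. y < p!i} = {1..<p!i}" using pi by auto
  hence "{y\<in>set p. y < p!i} = {1..<p!i}" using sp by simp
  thus "std p ! i = p ! i" using i pi by (simp add: std_nth)
qed

lemma no312_oiso: "oiso xs ys \<Longrightarrow> no312 ys \<Longrightarrow> no312 xs"
proof -
  assume o: "oiso xs ys" and n: "no312 ys"
  show "no312 xs" unfolding no312_def
  proof (intro allI impI notI)
    fix a b c assume abc: "a < b \<and> b < c \<and> c < length xs" and x: "xs!b < xs!c \<and> xs!c < xs!a"
    have l: "length xs = length ys" and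
      r: "\<And>i j. i < length xs \<Longrightarrow> j < length xs \<Longrightarrow> xs!i < xs!j \<longleftrightarrow> ys!i < ys!j"
      using o unfolding oiso_def by auto
    have "ys!b < ys!c" "ys!c < ys!a" using x abc r[of b c] r[of c a] by auto
    thus False using n abc l unfolding no312_def by auto
  qed
qed

lemma pat_interval:
  assumes "1 \<le> a" "b \<le> length xs"
  shows "pat {a..b} xs = std (take (b+1-a) (drop (a-1) xs))"
proof -
  have "{a..b} = {a..<b+1}" by auto
  hence "sorted_list_of_set {a..b} = [a..<b+1]" by (simp add: sorted_list_of_set_range)
  moreover have "map (\<lambda>i. xs ! (i - 1)) [a..<b+1] = take (b+1-a) (drop (a-1) xs)"
    using assms by (intro nth_equalityI) (auto simp del: upt_Suc)
  ultimately show ?thesis by (simp add: pat_def)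
qed


lemma perm312: "is_perm [3,1,2]"
  by (auto simp: is_perm_def)

lemma std3:
  fixes x y z :: "'a::linorder"
  assumes "distinct [x,y,z]"
  shows "std [x,y,z] = [3,1,2] \<longleftrightarrow> y < z \<and> z < x"
proof
  assume h: "std [x,y,z] = [3,1,2]"
  have "y < z" using std_less_iff[of 1 "[x,y,z]" 2] h by simp
  moreover have "z < x" using std_less_iff[of 2 "[x,y,z]" 0] h by simp
  ultimately show "y < z \<and> z < x" by simp
next
  assume h: "y < z \<and> z < x"
  have "oiso [x,y,z] [3::nat,1,2]"
    using h unfolding oiso_def by (auto simp: less_Suc_eq numeral_3_eq_3)
  hence "std [x,y,z] = std [3::nat,1,2]"
    using assms by (intro std_eq) auto
  thus "std [x,y,z] = [3,1,2]" using std_perm[OF perm312] by simp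
qed

lemma contains312:
  assumes d: "distinct \<sigma>"
  shows "contains [3,1,2] \<sigma> \<longleftrightarrow> \<not> no312 \<sigma>"
proof
  assume "contains [3,1,2] \<sigma>"
  then obtain I where I: "I \<subseteq> {1..length \<sigma>}" "card I = 3" "pat I \<sigma> = [3,1,2]"
    unfolding contains_def by auto
  have fin: "finite I" using I(1) finite_subset by blast
  define L where "L = sorted_list_of_set I"
  have L: "length L = 3" "sorted_wrt (<) L" "set L = I"
    using fin I(2) by (auto simp: L_def)
  obtain x y z where xyz: "L = [x,y,z]"
    using L(1) by (cases L; cases "tl L"; cases "tl (tl L)") (auto simp: numeral_3_eq_3)
  have o: "x < y" "y < z" "x < z" using L(2) xyz by auto
  have r: "1 \<le> x" "z \<le> length \<sigma>" using I(1) L(3) xyz by auto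
  have "pat I \<sigma> = std [\<sigma>!(x-1), \<sigma>!(y-1), \<sigma>!(z-1)]"
    unfolding pat_def L_def[symmetric] xyz by simp
  hence s3: "std [\<sigma>!(x-1), \<sigma>!(y-1), \<sigma>!(z-1)] = [3,1,2]" using I(3) by simp
  have dd: "distinct [\<sigma>!(x-1), \<sigma>!(y-1), \<sigma>!(z-1)]"
    using d o r by (auto simp: nth_eq_iff_index_eq)
  have v: "\<sigma>!(y-1) < \<sigma>!(z-1) \<and> \<sigma>!(z-1) < \<sigma>!(x-1)"
    using std3[OF dd] s3 by blast
  have "x-1 < y-1" "y-1 < z-1" "z-1 < length \<sigma>" using o r by arith+
  thus "\<not> no312 \<sigma>" unfolding no312_def using v by blast
next
  assume "\<not> no312 \<sigma>"
  then obtain a b c where abc: "a < b" "b < c" "c < length \<sigma>" "\<sigma>!b < \<sigma>!c" "\<sigma>!c < \<sigma>!a"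
    unfolding no312_def by blast
  define I where "I = set [a+1,b+1,c+1]"
  have sl: "sorted_list_of_set I = [a+1,b+1,c+1]"
    unfolding I_def using abc by (intro sorted_list_of_set.idem_if_sorted_distinct) auto
  have "card I = 3" unfolding I_def using abc by auto
  moreover have "I \<subseteq> {1..length \<sigma>}" unfolding I_def using abc by auto
  moreover have "pat I \<sigma> = std [\<sigma>!a, \<sigma>!b, \<sigma>!c]" unfolding pat_def sl by simp
  moreover have "distinct [\<sigma>!a, \<sigma>!b, \<sigma>!c]" using d abc by (auto simp: nth_eq_iff_index_eq)
  moreover have "std [\<sigma>!a, \<sigma>!b, \<sigma>!c] = [3,1,2]" using std3[OF calculation(4)] abc by blast
  ultimately show "contains [3,1,2] \<sigma>" unfolding contains_def by auto
qed



lemma rl1: "(real x < real l - 1/2) = (x < l)"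
proof
  assume "real x < real l - 1/2"
  hence "real x < real l" by linarith
  thus "x < l" by simp
next
  assume "x < l"
  hence "x + 1 \<le> l" by simp
  hence "real (x + 1) \<le> real l" by (simp only: of_nat_le_iff)
  hence "real x + 1 \<le> real l" by simp
  thus "real x < real l - 1/2" by linarith
qed

lemma rl2: "(real l - 1/2 < real x) = (l \<le> x)"
proof
  assume "real l - 1/2 < real x"
  hence "real l < real x + 1" by linarith
  hence "real l < real (x + 1)" by simp
  hence "l < x + 1" by (simp only: of_nat_less_iff)
  thus "l \<le> x" by simp
next
  assume "l \<le> x"
  hence "real l \<le> real x" by simp
  thus "real l - 1/2 < real x" by linarith
qed

lemma rl3: "real l - 1/2 \<noteq> real x"
  using rl1[of x l] rl2[of l x] by auto

theorem mainTheorem5: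
  fixes k :: nat and \<sigma> \<pi> \<pi>' :: "nat list"
  assumes "k \<ge> 1"
    and "\<sigma> \<in> Av [3,1,2]" and "length \<sigma> \<ge> k"
    and "\<pi> \<in> Av_k k [3,1,2]" and "en k \<sigma> = \<pi>"
    and "\<pi>' \<in> Av_k k [3,1,2]"
    and "pat {1..k-1} \<pi>' = pat {2..k} \<pi>"
  shows "\<exists>l \<in> {1..length \<sigma> + 1}. star \<sigma> l \<in> Av [3,1,2] \<and> en k (star \<sigma> l) = \<pi>'"
proof -
  define n where "n = length \<sigma>"
  have k1: "1 \<le> k" and kn: "k \<le> n" using assms(1,3) n_def by auto
  have sp: "is_perm \<sigma>" and sd: "distinct \<sigma>" and sn: "no312 \<sigma>"
    using assms(2) contains312 by (auto simp: Av_def is_perm_def)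
  have sset: "set \<sigma> = {1..n}" using sp n_def by (simp add: is_perm_def)
  have pl: "length \<pi> = k" using assms(4) by (simp add: Av_k_def)
  have p'l: "length \<pi>' = k" and p'p: "is_perm \<pi>'" and p'd: "distinct \<pi>'" and p'n: "no312 \<pi>'"
    using assms(6) contains312 by (auto simp: Av_k_def Av_def is_perm_def)
  define v where "v = drop (n-k+1) \<sigma>"
  have vl: "length v = k - 1" using kn n_def v_def by simp
  have vnth: "\<And>j. j < k - 1 \<Longrightarrow> v!j = \<sigma>!(n-k+1+j)" using kn n_def v_def by simp
  have vset: "\<And>j. j < k - 1 \<Longrightarrow> v!j \<in> {1..n}"
  proof -
    fix j assume j: "j < k - 1"
    have "n-k+1+j < length \<sigma>" using j kn n_def by simp
    hence "\<sigma>!(n-k+1+j) \<in> set \<sigma>" by (rule nth_mem)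
    thus "v!j \<in> {1..n}" using vnth[OF j] sset by simp
  qed
  have "en k \<sigma> = std (take k (drop (n-k) \<sigma>))"
    unfolding en_def n_def[symmetric] using kn n_def
    by (subst pat_interval) (auto simp: Suc_diff_le)
  hence pi: "\<pi> = std (drop (n-k) \<sigma>)" using assms(5) kn n_def by simp
  have "pat {1..k-1} \<pi>' = std (take (k-1) \<pi>')"
    using p'l by (subst pat_interval) auto
  moreover have "pat {2..k} \<pi> = std (take (k-1) (drop 1 \<pi>))"
    using pl k1 by (subst pat_interval) auto
  ultimately have "std (take (k-1) \<pi>') = std (take (k-1) (drop 1 \<pi>))" using assms(7) by simp
  hence "oiso (take (k-1) \<pi>') (take (k-1) (drop 1 \<pi>))"
    by (metis oiso_std oiso_sym oiso_trans)
  moreover have "oiso (take (k-1) (drop 1 \<pi>)) (take (k-1) (drop 1 (drop (n-k) \<sigma>)))"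
    unfolding pi by (intro oiso_take oiso_drop oiso_std)
  moreover have "take (k-1) (drop 1 (drop (n-k) \<sigma>)) = v"
    using kn n_def v_def by (simp add: add.commute)
  ultimately have "oiso (take (k-1) \<pi>') v" by (metis oiso_trans)
  hence P: "\<And>i j. i < k-1 \<Longrightarrow> j < k-1 \<Longrightarrow> \<pi>'!i < \<pi>'!j \<longleftrightarrow> v!i < v!j"
    unfolding oiso_def using p'l by auto
  define r where "r = \<pi>'!(k-1)"
  have rne: "\<And>i. i < k-1 \<Longrightarrow> \<pi>'!i \<noteq> r"
    unfolding r_def using p'd p'l by (simp add: nth_eq_iff_index_eq)
  define A where "A = {v!j | j. j < k-1 \<and> r < \<pi>'!j}"
  define l where "l = (if A = {} then n+1 else Min A)"
  have Afin: "finite A" unfolding A_def by simp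
  have j0ex: "\<exists>j0. j0 < k-1 \<and> r < \<pi>'!j0 \<and> l = v!j0" if ne: "A \<noteq> {}"
  proof -
    have "Min A \<in> A" using Min_in[OF Afin ne] .
    then obtain j0 where "j0 < k-1" "r < \<pi>'!j0" "Min A = v!j0" unfolding A_def by blast
    thus ?thesis using ne l_def by auto
  qed
  have C: "\<And>i. i < k-1 \<Longrightarrow> v!i < l \<longleftrightarrow> \<pi>'!i < r"
  proof -
    fix i assume i: "i < k-1"
    show "v!i < l \<longleftrightarrow> \<pi>'!i < r"
    proof (cases "A = {}")
      case True
      have "\<not> r < \<pi>'!i" using True i unfolding A_def by auto
      hence "\<pi>'!i < r" using rne[OF i] by auto
      moreover have "v!i < l" using vset[OF i] True l_def by auto
      ultimately show ?thesis by simp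
    next
      case False
      then obtain j0 where j0: "j0 < k-1" "r < \<pi>'!j0" "l = v!j0"
        using j0ex[OF False] by blast
      have mn: "l \<le> v!j" if "j < k-1" "r < \<pi>'!j" for j
      proof -
        have "v!j \<in> A" unfolding A_def using that by blast
        hence "Min A \<le> v!j" by (rule Min_le[OF Afin])
        thus ?thesis using False l_def by simp
      qed
      show ?thesis
      proof
        assume "v!i < l"
        thus "\<pi>'!i < r" using mn[OF i] rne[OF i] by (meson leD linorder_neqE_nat)
      next
        assume "\<pi>'!i < r"
        hence "\<pi>'!i < \<pi>'!j0" using j0 by simp
        thus "v!i < l" using P[OF i j0(1)] j0 by simp
      qed
    qed
  qed
  have lrange: "l \<in> {1..n+1}"
  proof (cases "A = {}")
    case True thus ?thesis using l_def by simp
  next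
    case False
    then obtain j0 where "j0 < k-1" "l = v!j0"
      using j0ex[OF False] by blast
    thus ?thesis using vset by fastforce
  qed
  define \<tau> where "\<tau> = map real \<sigma> @ [real l - 1/2]"
  have st: "star \<sigma> l = std \<tau>" unfolding star_def \<tau>_def by simp
  have \<tau>l: "length \<tau> = n+1" unfolding \<tau>_def n_def by simp
  have \<tau>d: "distinct \<tau>" unfolding \<tau>_def using sd rl3
    by (auto simp: distinct_map inj_on_def)
  have \<tau>lo: "\<And>i. i < n \<Longrightarrow> \<tau>!i = real (\<sigma>!i)" unfolding \<tau>_def n_def by (simp add: nth_append)
  have \<tau>hi: "\<tau>!n = real l - 1/2" unfolding \<tau>_def n_def by (simp add: nth_append)
  have "no312 \<tau>" unfolding no312_def
  proof (intro allI impI notI)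
    fix a b c assume abc: "a < b \<and> b < c \<and> c < length \<tau>" and x: "\<tau>!b < \<tau>!c \<and> \<tau>!c < \<tau>!a"
    show False
    proof (cases "c < n")
      case True
      hence "\<sigma>!b < \<sigma>!c \<and> \<sigma>!c < \<sigma>!a" using x abc \<tau>lo by simp
      thus False using sn abc True n_def unfolding no312_def by blast
    next
      case False
      hence c: "c = n" using abc \<tau>l by simp
      have bl: "\<sigma>!b < l" and al: "l \<le> \<sigma>!a"
        using x c abc \<tau>lo \<tau>hi rl1 rl2 by auto
      show False
      proof (cases "A = {}")
        case True
        have "\<sigma>!a \<in> {1..n}" using sset abc c n_def nth_mem by (metis less_trans)
        thus False using al True l_def by simp
      next
        case False
        then obtain j0 where j0: "j0 < k-1" "r < \<pi>'!j0" "l = v!j0"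
          using j0ex[OF False] by blast
        define q where "q = n-k+1+j0"
        have lq: "l = \<sigma>!q" using j0 vnth q_def by simp
        have qn: "q < n" using q_def j0 kn by simp
        consider "b < q" | "b = q" | "q < b" by linarith
        thus False
        proof cases
          case 1
          have "a \<noteq> q" using 1 abc by simp
          hence "\<sigma>!a \<noteq> \<sigma>!q" using sd qn abc 1 n_def by (simp add: nth_eq_iff_index_eq)
          hence "\<sigma>!b < \<sigma>!q \<and> \<sigma>!q < \<sigma>!a" using al bl lq by simp
          thus False using sn abc 1 qn n_def unfolding no312_def by blast
        next
          case 2 thus False using bl lq by simp
        next
          case 3
          define jb where "jb = b - (n-k+1)"
          have jb: "jb < k-1" "j0 < jb" "v!jb = \<sigma>!b"
            using 3 abc c kn q_def jb_def vnth by auto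
          have "\<pi>'!jb < r" using C[OF jb(1)] jb(3) bl by simp
          hence "\<pi>'!jb < \<pi>'!(k-1) \<and> \<pi>'!(k-1) < \<pi>'!j0" using j0 r_def by simp
          moreover have "k-1 < length \<pi>'" using p'l k1 by simp
          ultimately show False using p'n jb unfolding no312_def by blast
        qed
      qed
    qed
  qed
  hence "no312 (std \<tau>)" using no312_oiso oiso_std by blast
  hence av: "star \<sigma> l \<in> Av [3,1,2]"
    unfolding st Av_def using contains312 distinct_std is_perm_std \<tau>d by auto
  have "en k (star \<sigma> l) = std (take k (drop (n+1-k) (std \<tau>)))"
    unfolding en_def st using \<tau>l kn by (subst pat_interval) (auto simp: Suc_diff_le)
  also have "\<dots> = std (drop (n+1-k) (std \<tau>))" using \<tau>l kn by simp
  also have "\<dots> = std (drop (n+1-k) \<tau>)"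
    using \<tau>d distinct_std[OF \<tau>d] by (intro std_eq oiso_drop oiso_std distinct_drop)
  also have dr: "drop (n+1-k) \<tau> = map real v @ [real l - 1/2]"
    unfolding \<tau>_def v_def using kn k1 n_def by (simp add: drop_map Suc_diff_le)
  also have "std (map real v @ [real l - 1/2]) = std \<pi>'"
  proof (rule std_eq)
    show "distinct (map real v @ [real l - 1/2])"
      using distinct_drop[OF \<tau>d, of "n+1-k"] dr by simp
    show "distinct \<pi>'" by (rule p'd)
    show "oiso (map real v @ [real l - 1/2]) \<pi>'"
      unfolding oiso_def
    proof (intro conjI allI impI)
      show "length (map real v @ [real l - 1/2]) = length \<pi>'" using vl p'l k1 by simp
      fix i j assume i: "i < length (map real v @ [real l - 1/2])"
        and j: "j < length (map real v @ [real l - 1/2])"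
      have i': "i < k-1 \<or> i = k-1" and j': "j < k-1 \<or> j = k-1" using i j vl k1 by auto
      show "((map real v @ [real l - 1/2])!i < (map real v @ [real l - 1/2])!j) = (\<pi>'!i < \<pi>'!j)"
        using i' j'
      proof (elim disjE)
        assume "i < k-1" "j < k-1" thus ?thesis using P vl by (simp add: nth_append)
      next
        assume a: "i < k-1" "j = k-1" thus ?thesis using C[OF a(1)] vl rl1 r_def by (simp add: nth_append)
      next
        assume a: "i = k-1" "j < k-1" thus ?thesis using C[OF a(2)] rne[OF a(2)] vl rl2 r_def
          by (auto simp: nth_append)
      next
        assume "i = k-1" "j = k-1" thus ?thesis by simp
      qed
    qed
  qed
  also have "\<dots> = \<pi>'" using std_perm[OF p'p] .
  finally have "en k (star \<sigma> l) = \<pi>'" .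
  thus ?thesis using av lrange n_def by auto
qed


end
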